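(* Let $p$ be an odd prime, $q=p^m$, $q=et+1$ with integers $e\geq 2,t\geq 1$, $R_{e,q}=\mathbb{F}_q[u]/\langle u^e-1\rangle$, and let $\varphi:R_{e,q}^n\to\mathbb{F}_q^{en}$ be the Gray map defined by a matrix $M\in GL_e(\mathbb{F}_q)$ with $MM^T=\gamma I_e$, $\gamma\in\mathbb{F}_q^*$ (see context). A linear code $\mathcal{C}$ of length $n$ over $R_{e,q}$ is an LCD code if and only if $\varphi(\mathcal{C})$ is an LCD code of length $en$ over $\mathbb{F}_q$.
   Context: Write $u^e-1=\prod_{i=1}^e(u-\alpha_i)$ over $\mathbb{F}_q$, $G_i=u-\alpha_i$, $\widehat{G}_i=(u^e-1)/G_i$, $z_iG_i+h_i\widehat{G}_i=1$, $\mu_i=h_i\widehat{G}_i$; these are pairwise orthogonal idempotents summing to $1$, and each $r\in R_{e,q}$ is uniquely $r=\sum_i s_i\mu_i$, $s_i\in\mathbb{F}_q$. The Gray map is $\varphi(r_0,\dots,r_{n-1})=(\boldsymbol{r_0}M,\dots,\boldsymbol{r_{n-1}}M)$ with $\boldsymbol{r_j}=(s_{j,1},\dots,s_{j,e})$ for $r_j=\sum_i s_{j,i}\mu_i$. A code is LCD if $\mathcal{C}\cap\mathcal{C}^\perp=\{0\}$, with Euclidean duals. *)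

theory Defs
  imports "HOL-Computational_Algebra.Polynomial" "HOL-Library.Cardinality"
begin

text \<open>The ring R_{e,q} = F_q[u]/(u^e - 1) is represented by its canonical
representatives: polynomials of degree < e, with multiplication reduced mod u^e - 1.\<close>

definition uf :: "nat \<Rightarrow> 'a::field poly" where
  "uf e = monom 1 e - 1"

definition Rset :: "nat \<Rightarrow> 'a::field poly set" where
  "Rset e = {r. degree r < e}"

definition Rmult :: "nat \<Rightarrow> 'a::field poly \<Rightarrow> 'a poly \<Rightarrow> 'a poly" where
  "Rmult e a b = (a * b) mod uf e"

definition Rvecs :: "nat \<Rightarrow> nat \<Rightarrow> 'a::field poly list set" where
  "Rvecs e n = {xs. length xs = n \<and> set xs \<subseteq> Rset e}"

definition linear_code_R :: "nat \<Rightarrow> nat \<Rightarrow> 'a::field poly list set \<Rightarrow> bool" where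
  "linear_code_R e n C \<longleftrightarrow>
     C \<subseteq> Rvecs e n \<and> replicate n 0 \<in> C \<and>
     (\<forall>x\<in>C. \<forall>y\<in>C. map2 (+) x y \<in> C) \<and>
     (\<forall>r\<in>Rset e. \<forall>x\<in>C. map (Rmult e r) x \<in> C)"

definition R_inner :: "nat \<Rightarrow> 'a::field poly list \<Rightarrow> 'a poly list \<Rightarrow> 'a poly" where
  "R_inner e xs ys = (\<Sum>j<length xs. xs ! j * ys ! j) mod uf e"

definition R_dual :: "nat \<Rightarrow> nat \<Rightarrow> 'a::field poly list set \<Rightarrow> 'a poly list set" where
  "R_dual e n C = {y \<in> Rvecs e n. \<forall>x\<in>C. R_inner e x y = 0}"

definition LCD_R :: "nat \<Rightarrow> nat \<Rightarrow> 'a::field poly list set \<Rightarrow> bool" where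
  "LCD_R e n C \<longleftrightarrow> C \<inter> R_dual e n C = {replicate n 0}"

definition F_dual :: "nat \<Rightarrow> 'a::field list set \<Rightarrow> 'a list set" where
  "F_dual N D = {y. length y = N \<and> (\<forall>x\<in>D. (\<Sum>k<N. x ! k * y ! k) = 0)}"

definition LCD_F :: "nat \<Rightarrow> 'a::field list set \<Rightarrow> bool" where
  "LCD_F N D \<longleftrightarrow> D \<inter> F_dual N D = {replicate N 0}"

text \<open>Idempotents (indices 0..e-1 instead of 1..e).\<close>
definition Gp :: "(nat \<Rightarrow> 'a::field) \<Rightarrow> nat \<Rightarrow> 'a poly" where
  "Gp \<alpha> i = [:- \<alpha> i, 1:]"

definition Ghat :: "nat \<Rightarrow> (nat \<Rightarrow> 'a::field) \<Rightarrow> nat \<Rightarrow> 'a poly" where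
  "Ghat e \<alpha> i = uf e div Gp \<alpha> i"

definition hcoef :: "nat \<Rightarrow> (nat \<Rightarrow> 'a::field) \<Rightarrow> nat \<Rightarrow> 'a poly" where
  "hcoef e \<alpha> i = (SOME h. \<exists>z. z * Gp \<alpha> i + h * Ghat e \<alpha> i = 1)"

definition mu :: "nat \<Rightarrow> (nat \<Rightarrow> 'a::field) \<Rightarrow> nat \<Rightarrow> 'a poly" where
  "mu e \<alpha> i = (hcoef e \<alpha> i * Ghat e \<alpha> i) mod uf e"

definition coords :: "nat \<Rightarrow> (nat \<Rightarrow> 'a::field) \<Rightarrow> 'a poly \<Rightarrow> nat \<Rightarrow> 'a" where
  "coords e \<alpha> r = (THE s. (\<forall>i. e \<le> i \<longrightarrow> s i = 0) \<and>
                        r = (\<Sum>i<e. smult (s i) (mu e \<alpha> i)))"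

text \<open>Gray map: (r_0,...,r_{n-1}) \<mapsto> (s_0 M, ..., s_{n-1} M), M an e x e matrix
  given as a function on indices < e.\<close>
definition gray :: "nat \<Rightarrow> (nat \<Rightarrow> 'a::field) \<Rightarrow> (nat \<Rightarrow> nat \<Rightarrow> 'a) \<Rightarrow> 'a poly list \<Rightarrow> 'a list" where
  "gray e \<alpha> M xs =
     concat (map (\<lambda>r. map (\<lambda>k. \<Sum>i<e. coords e \<alpha> r i * M i k) [0..<e]) xs)"

end

theory Submission
  imports Defs
begin

lemma of_nat_card_zero: "of_nat CARD('a::{finite,ring_1}) = (0::'a)"
proof -
  have inj: "inj (\<lambda>x. x + (1::'a))" by (simp add: inj_on_def)
  have surj: "range (\<lambda>x. x + (1::'a)) = UNIV"
    by (metis diff_add_cancel surj_def)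
  have "(\<Sum>x\<in>UNIV. x + 1) = (\<Sum>x\<in>UNIV. (x::'a))"
    using sum.reindex[OF inj, of id] surj by simp
  then have "(\<Sum>x\<in>UNIV. (x::'a)) + of_nat CARD('a) = (\<Sum>x\<in>UNIV. x)"
    by (simp add: sum.distrib)
  then show ?thesis by simp
qed
lemma degree_uf: "e \<ge> 1 \<Longrightarrow> degree (uf e :: 'a::field poly) = e"
proof -
  assume e: "e \<ge> 1"
  have "coeff (uf e :: 'a poly) e \<noteq> 0" using e by (simp add: uf_def coeff_monom)
  hence "e \<le> degree (uf e :: 'a poly)" by (rule le_degree)
  moreover have "degree (uf e :: 'a poly) \<le> e"
    by (rule degree_le) (auto simp: uf_def coeff_monom)
  ultimately show ?thesis by simp
qed

locale lcdsetup =
  fixes e :: nat and \<alpha> :: "nat \<Rightarrow> 'a::field"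
  assumes e1: "e \<ge> 1"
    and ufp: "uf e = (\<Prod>i<e. [:- \<alpha> i, 1:])"
    and echar: "of_nat e \<noteq> (0::'a)"
begin

lemma uf_nz: "uf e \<noteq> (0::'a poly)"
  using degree_uf[OF e1] e1 by (metis degree_0 not_one_le_zero)

lemma uf_root: "k < e \<Longrightarrow> poly (uf e) (\<alpha> k) = 0"
  unfolding ufp by (auto simp: poly_prod intro: bexI[of _ k])

lemma distinct_alpha:
  assumes "i < e" "k < e" "i \<noteq> k" shows "\<alpha> i \<noteq> \<alpha> k"
proof
  assume eq: "\<alpha> i = \<alpha> k"
  define a where "a = \<alpha> i"
  have "uf e = [:- \<alpha> i, 1:] * (\<Prod>j\<in>{..<e}-{i}. [:- \<alpha> j, 1:])"
    unfolding ufp using assms by (simp add: prod.remove)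
  also have "(\<Prod>j\<in>{..<e}-{i}. [:- \<alpha> j, 1:]) = [:- \<alpha> k, 1:] * (\<Prod>j\<in>{..<e}-{i}-{k}. [:- \<alpha> j, 1:])"
    using assms by (subst prod.remove[of _ k]) auto
  finally obtain g where g: "uf e = [:- a, 1:]^2 * g"
    using eq unfolding a_def by (metis mult.assoc power2_eq_square)
  have "pderiv (uf e) = [:- a, 1:]^2 * pderiv g + g * (smult 2 [:- a, 1:] * pderiv [:- a, 1:])"
    unfolding g pderiv_mult by (simp add: pderiv_power_Suc numeral_2_eq_2 del: power_Suc)
  hence d0: "poly (pderiv (uf e)) a = 0" by simp
  have r0: "poly (uf e) a = 0" using uf_root assms unfolding a_def by simp
  have "pderiv (uf e :: 'a poly) = monom (of_nat e) (e - 1)"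
    by (simp add: uf_def pderiv_diff pderiv_monom)
  hence "of_nat e * a ^ (e - 1) = 0" using d0 by (simp add: poly_monom)
  moreover have "a ^ e = 1" using r0 by (simp add: uf_def poly_monom)
  hence "a \<noteq> 0" using e1 by (cases e) auto
  ultimately show False using echar by simp
qed


lemma mod_deg: "degree (r mod uf e :: 'a poly) < e"
  using degree_mod_less[OF uf_nz, of r] degree_uf[OF e1, where 'a='a] e1 by auto

lemma zero_lemma:
  assumes "degree r < e" "\<forall>k<e. poly r (\<alpha> k) = 0" shows "r = 0"
proof (rule ccontr)
  assume nz: "r \<noteq> 0"
  have "\<alpha> ` {..<e} \<subseteq> {x. poly r x = 0}" using assms(2) by auto
  moreover have "finite {x. poly r x = 0}" using poly_roots_finite[OF nz] .
  ultimately have "card (\<alpha> ` {..<e}) \<le> card {x. poly r x = 0}" by (rule card_mono[rotated])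
  also have "\<dots> \<le> degree r" by (rule card_poly_roots_bound[OF nz])
  finally have "card (\<alpha> ` {..<e}) < e" using assms(1) by simp
  moreover have "inj_on \<alpha> {..<e}" using distinct_alpha by (auto simp: inj_on_def)
  ultimately show False by (simp add: card_image)
qed

lemma ghat_eq: "i < e \<Longrightarrow> Ghat e \<alpha> i = (\<Prod>j\<in>{..<e}-{i}. [:- \<alpha> j, 1:])"
proof -
  assume i: "i < e"
  have "uf e = Gp \<alpha> i * (\<Prod>j\<in>{..<e}-{i}. [:- \<alpha> j, 1:])"
    unfolding ufp Gp_def using i by (simp add: prod.remove)
  moreover have "Gp \<alpha> i \<noteq> 0" by (simp add: Gp_def)
  ultimately show ?thesis unfolding Ghat_def by simp
qed

lemma ghat_root: "i < e \<Longrightarrow> k < e \<Longrightarrow> k \<noteq> i \<Longrightarrow> poly (Ghat e \<alpha> i) (\<alpha> k) = 0"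
  by (auto simp: ghat_eq poly_prod intro!: bexI[of _ k])

lemma ghat_nz: "i < e \<Longrightarrow> poly (Ghat e \<alpha> i) (\<alpha> i) \<noteq> 0"
  using distinct_alpha by (auto simp: ghat_eq poly_prod)

lemma hcoef_ex: assumes i: "i < e" shows "\<exists>z. z * Gp \<alpha> i + hcoef e \<alpha> i * Ghat e \<alpha> i = 1"
proof -
  define c where "c = poly (Ghat e \<alpha> i) (\<alpha> i)"
  have c: "c \<noteq> 0" using ghat_nz[OF i] by (simp add: c_def)
  have "poly (Ghat e \<alpha> i - [:c:]) (\<alpha> i) = 0" by (simp add: c_def)
  then obtain Q where Q: "Ghat e \<alpha> i - [:c:] = [:- \<alpha> i, 1:] * Q"
    unfolding poly_eq_0_iff_dvd by (auto elim: dvdE)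
  have "smult (- inverse c) Q * Gp \<alpha> i + [:inverse c:] * Ghat e \<alpha> i = 1"
  proof -
    have "Ghat e \<alpha> i = [:c:] + Gp \<alpha> i * Q" using Q by (simp add: Gp_def algebra_simps)
    hence "smult (- inverse c) Q * Gp \<alpha> i + [:inverse c:] * Ghat e \<alpha> i
          = [:inverse c:] * [:c:]" by (simp add: algebra_simps)
    also have "\<dots> = 1" using c by (simp add: one_pCons)
    finally show ?thesis .
  qed
  hence "\<exists>h z. z * Gp \<alpha> i + h * Ghat e \<alpha> i = 1" by blast
  thus ?thesis unfolding hcoef_def by (rule someI_ex)
qed

lemma mu_eval: assumes "i < e" "k < e"
  shows "poly (mu e \<alpha> i) (\<alpha> k) = (if k = i then 1 else 0)"
proof -
  have "poly (mu e \<alpha> i) (\<alpha> k) = poly (hcoef e \<alpha> i) (\<alpha> k) * poly (Ghat e \<alpha> i) (\<alpha> k)"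
    unfolding mu_def using poly_mod[OF uf_root[OF assms(2)]] by simp
  moreover obtain z where z: "z * Gp \<alpha> i + hcoef e \<alpha> i * Ghat e \<alpha> i = 1"
    using hcoef_ex[OF assms(1)] by blast
  have "poly (z * Gp \<alpha> i + hcoef e \<alpha> i * Ghat e \<alpha> i) (\<alpha> i) = 1" using z by simp
  hence "poly (hcoef e \<alpha> i) (\<alpha> i) * poly (Ghat e \<alpha> i) (\<alpha> i) = 1" by (simp add: Gp_def)
  ultimately show ?thesis using ghat_root assms by auto
qed

lemma mu_deg: "degree (mu e \<alpha> i) < e"
  unfolding mu_def by (rule mod_deg)

lemma sum_deg: "finite A \<Longrightarrow> (\<And>i. i \<in> A \<Longrightarrow> degree (f i :: 'a poly) < e) \<Longrightarrow> degree (sum f A) < e"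
proof (induction A rule: finite_induct)
  case empty then show ?case using e1 by simp
next
  case (insert x F)
  have a: "degree (f x) < e" using insert.prems by simp
  have b: "degree (sum f F) < e" using insert by simp
  show ?case
    using degree_add_le_max[of "f x" "sum f F"] a b insert.hyps by simp
qed

lemma coords_eq: assumes r: "degree r < e"
  shows "coords e \<alpha> r = (\<lambda>i. if i < e then poly r (\<alpha> i) else 0)"
  unfolding coords_def
proof (rule the_equality)
  let ?s = "\<lambda>i. if i < e then poly r (\<alpha> i) else 0"
  have "r - (\<Sum>i<e. smult (?s i) (mu e \<alpha> i)) = 0"
  proof (rule zero_lemma)
    show "degree (r - (\<Sum>i<e. smult (?s i) (mu e \<alpha> i))) < e"
    proof -
      have "degree (\<Sum>i<e. smult (?s i) (mu e \<alpha> i)) < e"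
        by (rule sum_deg) (auto intro: le_less_trans[OF degree_smult_le] mu_deg)
      thus ?thesis using r degree_diff_le_max[of r "\<Sum>i<e. smult (?s i) (mu e \<alpha> i)"] by simp
    qed
    show "\<forall>k<e. poly (r - (\<Sum>i<e. smult (?s i) (mu e \<alpha> i))) (\<alpha> k) = 0"
      by (auto simp: poly_sum mu_eval if_distrib cong: if_cong)
  qed
  thus "(\<forall>i. e \<le> i \<longrightarrow> ?s i = 0) \<and> r = (\<Sum>i<e. smult (?s i) (mu e \<alpha> i))" by simp
next
  fix s assume s: "(\<forall>i. e \<le> i \<longrightarrow> s i = 0) \<and> r = (\<Sum>i<e. smult (s i) (mu e \<alpha> i))"
  show "s = (\<lambda>i. if i < e then poly r (\<alpha> i) else 0)"
  proof
    fix k show "s k = (if k < e then poly r (\<alpha> k) else 0)"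
    proof (cases "k < e")
      case True
      have "poly r (\<alpha> k) = (\<Sum>i<e. s i * poly (mu e \<alpha> i) (\<alpha> k))"
        using s by (simp add: poly_sum)
      also have "\<dots> = s k" using True by (simp add: mu_eval if_distrib cong: if_cong)
      finally show ?thesis using True by simp
    qed (use s in auto)
  qed
qed


lemma Rmult_eval: "k < e \<Longrightarrow> poly (Rmult e a b) (\<alpha> k) = poly a (\<alpha> k) * poly b (\<alpha> k)"
  unfolding Rmult_def using poly_mod[OF uf_root] by simp

lemma R_inner_iff:
  assumes "length x = n"
  shows "R_inner e x y = 0 \<longleftrightarrow> (\<forall>k<e. (\<Sum>j<n. poly (x!j) (\<alpha> k) * poly (y!j) (\<alpha> k)) = 0)"
proof -
  define S where "S = (\<Sum>j<n. x ! j * y ! j)"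
  have R: "R_inner e x y = S mod uf e" unfolding R_inner_def S_def using assms by simp
  have ev: "poly S (\<alpha> k) = (\<Sum>j<n. poly (x!j) (\<alpha> k) * poly (y!j) (\<alpha> k))" for k
    unfolding S_def by (simp add: poly_sum)
  show ?thesis
  proof
    assume "R_inner e x y = 0"
    then show "\<forall>k<e. (\<Sum>j<n. poly (x!j) (\<alpha> k) * poly (y!j) (\<alpha> k)) = 0"
      using R ev poly_mod[OF uf_root] by (metis poly_0)
  next
    assume h: "\<forall>k<e. (\<Sum>j<n. poly (x!j) (\<alpha> k) * poly (y!j) (\<alpha> k)) = 0"
    show "R_inner e x y = 0" unfolding R
    proof (rule zero_lemma)
      show "degree (S mod uf e) < e" by (rule mod_deg)
      show "\<forall>k<e. poly (S mod uf e) (\<alpha> k) = 0" using h ev poly_mod[OF uf_root] by simp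
    qed
  qed
qed

definition gv :: "(nat \<Rightarrow> nat \<Rightarrow> 'a) \<Rightarrow> 'a poly \<Rightarrow> 'a list" where
  "gv M r = map (\<lambda>k. \<Sum>i<e. poly r (\<alpha> i) * M i k) [0..<e]"

lemma gray_eval: "x \<in> Rvecs e n \<Longrightarrow> gray e \<alpha> M x = concat (map (gv M) x)"
  unfolding gray_def gv_def
proof (intro arg_cong[where f=concat] map_cong refl)
  fix r assume "x \<in> Rvecs e n" "r \<in> set x"
  hence "degree r < e" by (auto simp: Rvecs_def Rset_def)
  thus "(\<Sum>i<e. coords e \<alpha> r i * M i k) = (\<Sum>i<e. poly r (\<alpha> i) * M i k)" for k
    by (simp add: coords_eq)
qed

lemma gv_len[simp]: "length (gv M r) = e" by (simp add: gv_def)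

end

lemma concat_len: "(\<And>r. length (f r) = e) \<Longrightarrow> length (concat (map f xs)) = length xs * e"
  by (induction xs) auto

lemma concat_nth: "(\<And>r. length (f r) = e) \<Longrightarrow> j < length xs \<Longrightarrow> k < e \<Longrightarrow>
    concat (map f xs) ! (j*e+k) = f (xs!j) ! k"
proof (induction xs arbitrary: j)
  case Nil then show ?case by simp
next
  case (Cons a xs)
  show ?case
  proof (cases j)
    case 0 then show ?thesis using Cons by (simp add: nth_append)
  next
    case (Suc j')
    have "concat (map f (a # xs)) ! (j*e+k) = concat (map f xs) ! (j'*e+k)"
      using Suc Cons.prems by (simp add: nth_append)
    then show ?thesis using Cons Suc by simp
  qed
qed

lemma sum_block: "(\<Sum>K\<in>{a..<a+e}. g K) = (\<Sum>k<e. g (a + k :: nat))"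
  using sum.shift_bounds_nat_ivl[of g 0 a e] by (simp add: atLeast0LessThan add.commute)

lemma concat_inner:
  assumes "\<And>r. length (f r) = e" "length xs = n" "length ys = n"
  shows "(\<Sum>K<n*e. concat (map f xs) ! K * concat (map f ys) ! K)
       = (\<Sum>j<n. \<Sum>k<e. f (xs!j) ! k * f (ys!j) ! k)"
proof -
  have "(\<Sum>K<n*e. concat (map f xs) ! K * concat (map f ys) ! K)
      = (\<Sum>j<n. \<Sum>K\<in>{j*e..<j*e+e}. concat (map f xs) ! K * concat (map f ys) ! K)"
    by (rule sum.nat_group[symmetric])
  also have "\<dots> = (\<Sum>j<n. \<Sum>k<e. f (xs!j) ! k * f (ys!j) ! k)"
    by (rule sum.cong[OF refl]) (simp add: sum_block concat_nth assms)
  finally show ?thesis .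
qed

lemma M_inner:
  fixes M :: "nat \<Rightarrow> nat \<Rightarrow> 'a::comm_ring_1"
  assumes "\<forall>i<e. \<forall>k<e. (\<Sum>j<e. M i j * M k j) = (if i = k then \<gamma> else 0)"
  shows "(\<Sum>k<e. (\<Sum>i<e. a i * M i k) * (\<Sum>i<e. b i * M i k)) = \<gamma> * (\<Sum>i<e. a i * b i)"
proof -
  have "(\<Sum>k<e. (\<Sum>i<e. a i * M i k) * (\<Sum>l<e. b l * M l k))
      = (\<Sum>k<e. \<Sum>i<e. \<Sum>l<e. a i * b l * (M i k * M l k))"
    unfolding sum_product by (intro sum.cong refl) (simp add: mult_ac)
  also have "\<dots> = (\<Sum>i<e. \<Sum>k<e. \<Sum>l<e. a i * b l * (M i k * M l k))"
    by (rule sum.swap)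
  also have "\<dots> = (\<Sum>i<e. \<Sum>l<e. \<Sum>k<e. a i * b l * (M i k * M l k))"
    by (rule sum.cong[OF refl], rule sum.swap)
  also have "\<dots> = (\<Sum>i<e. \<Sum>l<e. a i * b l * (\<Sum>k<e. M i k * M l k))"
    by (simp add: sum_distrib_left)
  also have "\<dots> = (\<Sum>i<e. \<Sum>l<e. a i * b l * (if i = l then \<gamma> else 0))"
    using assms by simp
  also have "\<dots> = (\<Sum>i<e. a i * b i * \<gamma>)"
    by (rule sum.cong[OF refl]) (simp add: if_distrib sum.delta cong: if_cong)
  also have "\<dots> = \<gamma> * (\<Sum>i<e. a i * b i)"
    by (simp add: sum_distrib_left mult_ac)
  finally show ?thesis .
qed


context lcdsetup begin

lemma gv_nth: "k < e \<Longrightarrow> gv M r ! k = (\<Sum>i<e. poly r (\<alpha> i) * M i k)"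
  by (simp add: gv_def)

lemma gray_len: "x \<in> Rvecs e n \<Longrightarrow> length (gray e \<alpha> M x) = e * n"
  using gray_eval[of x n M] concat_len[of "gv M" e x] by (simp add: Rvecs_def mult.commute)

lemma zero_Rvecs: "replicate n 0 \<in> Rvecs e n"
  using e1 by (auto simp: Rvecs_def Rset_def)

lemma gray_zero: "gray e \<alpha> M (replicate n 0) = replicate (e * n) 0"
proof -
  have g0: "gv M 0 = replicate e 0"
    by (rule nth_equalityI) (simp_all add: gv_nth)
  have "concat (replicate n (replicate e (0::'a))) = replicate (n * e) 0"
    by (induction n) (simp_all add: replicate_add)
  thus ?thesis using gray_eval[OF zero_Rvecs, of M] g0 by (simp add: mult.commute)
qed

lemma F_inner:
  assumes Mo: "\<forall>i<e. \<forall>k<e. (\<Sum>j<e. M i j * M k j) = (if i = k then \<gamma> else 0)"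
    and x: "x \<in> Rvecs e n" and y: "y \<in> Rvecs e n"
  shows "(\<Sum>K<e*n. gray e \<alpha> M x ! K * gray e \<alpha> M y ! K)
       = \<gamma> * (\<Sum>j<n. \<Sum>i<e. poly (x!j) (\<alpha> i) * poly (y!j) (\<alpha> i))"
proof -
  have lx: "length x = n" and ly: "length y = n" using x y by (auto simp: Rvecs_def)
  have "(\<Sum>K<e*n. gray e \<alpha> M x ! K * gray e \<alpha> M y ! K)
      = (\<Sum>K<n*e. concat (map (gv M) x) ! K * concat (map (gv M) y) ! K)"
    using gray_eval[OF x] gray_eval[OF y] by (simp add: mult.commute)
  also have "\<dots> = (\<Sum>j<n. \<Sum>k<e. gv M (x!j) ! k * gv M (y!j) ! k)"
    by (rule concat_inner[OF gv_len lx ly])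
  also have "\<dots> = (\<Sum>j<n. \<Sum>k<e. (\<Sum>i<e. poly (x!j) (\<alpha> i) * M i k) * (\<Sum>i<e. poly (y!j) (\<alpha> i) * M i k))"
    by (simp add: gv_nth)
  also have "\<dots> = (\<Sum>j<n. \<gamma> * (\<Sum>i<e. poly (x!j) (\<alpha> i) * poly (y!j) (\<alpha> i)))"
    by (rule sum.cong[OF refl], rule M_inner[OF Mo])
  finally show ?thesis by (simp add: sum_distrib_left)
qed

lemma gray_inj0:
  assumes Mo: "\<forall>i<e. \<forall>k<e. (\<Sum>j<e. M i j * M k j) = (if i = k then \<gamma> else 0)"
    and g: "\<gamma> \<noteq> 0"
    and y: "y \<in> Rvecs e n" and z: "gray e \<alpha> M y = replicate (e * n) 0"
  shows "y = replicate n 0"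
proof -
  have ly: "length y = n" using y by (simp add: Rvecs_def)
  have yj: "y ! j = 0" if j: "j < n" for j
  proof -
    have v0: "(\<Sum>i<e. poly (y!j) (\<alpha> i) * M i k) = 0" if k: "k < e" for k
    proof -
      have "j * e + k < e * n"
      proof -
        have "j * e + k < j * e + e" using k by simp
        also have "\<dots> = Suc j * e" by simp
        also have "\<dots> \<le> n * e" using j by (intro mult_le_mono1) simp
        finally show ?thesis by (simp add: mult.commute)
      qed
      hence "gray e \<alpha> M y ! (j * e + k) = 0" using z by simp
      moreover have "gray e \<alpha> M y ! (j * e + k) = gv M (y!j) ! k"
        using gray_eval[OF y] concat_nth[OF gv_len, of j y k] j k ly by simp
      ultimately show ?thesis using gv_nth[OF k] by simp
    qed
    have "\<forall>l<e. poly (y!j) (\<alpha> l) = 0"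
    proof (intro allI impI)
      fix l assume l: "l < e"
      have "(\<Sum>k<e. (\<Sum>i<e. poly (y!j) (\<alpha> i) * M i k) * (\<Sum>i<e. (if i = l then 1 else 0) * M i k))
          = \<gamma> * (\<Sum>i<e. poly (y!j) (\<alpha> i) * (if i = l then 1 else 0))"
        by (rule M_inner[OF Mo])
      hence "\<gamma> * poly (y!j) (\<alpha> l) = 0" using v0 l by (simp add: if_distrib sum.delta' cong: if_cong)
      thus "poly (y!j) (\<alpha> l) = 0" using g by simp
    qed
    moreover have "y!j \<in> set y" using j ly by simp
    hence "degree (y!j) < e" using y by (auto simp: Rvecs_def Rset_def)
    ultimately show ?thesis using zero_lemma by blast
  qed
  show ?thesis by (rule nth_equalityI) (simp_all add: ly yj)
qed

lemma claim:
  assumes Mo: "\<forall>i<e. \<forall>k<e. (\<Sum>j<e. M i j * M k j) = (if i = k then \<gamma> else 0)"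
    and g: "\<gamma> \<noteq> 0" and lin: "linear_code_R e n C" and yC: "y \<in> C"
  shows "y \<in> R_dual e n C \<longleftrightarrow> gray e \<alpha> M y \<in> F_dual (e * n) (gray e \<alpha> M ` C)"
proof -
  have CR: "C \<subseteq> Rvecs e n" using lin by (simp add: linear_code_R_def)
  have y: "y \<in> Rvecs e n" using yC CR by auto
  have lenC: "length x = n" if "x \<in> C" for x using that CR by (auto simp: Rvecs_def)
  show ?thesis
  proof
    assume yd: "y \<in> R_dual e n C"
    show "gray e \<alpha> M y \<in> F_dual (e * n) (gray e \<alpha> M ` C)"
      unfolding F_dual_def
    proof (intro CollectI conjI ballI)
      show "length (gray e \<alpha> M y) = e * n" by (rule gray_len[OF y])
      fix w assume "w \<in> gray e \<alpha> M ` C"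
      then obtain x where xC: "x \<in> C" and w: "w = gray e \<alpha> M x" by auto
      have "R_inner e x y = 0" using yd xC by (simp add: R_dual_def)
      hence h: "\<forall>i<e. (\<Sum>j<n. poly (x!j) (\<alpha> i) * poly (y!j) (\<alpha> i)) = 0"
        using R_inner_iff[OF lenC[OF xC]] by simp
      have "(\<Sum>K<e*n. w ! K * gray e \<alpha> M y ! K)
          = \<gamma> * (\<Sum>j<n. \<Sum>i<e. poly (x!j) (\<alpha> i) * poly (y!j) (\<alpha> i))"
        unfolding w using F_inner[OF Mo _ y] xC CR by auto
      also have "\<dots> = \<gamma> * (\<Sum>i<e. \<Sum>j<n. poly (x!j) (\<alpha> i) * poly (y!j) (\<alpha> i))"
        by (simp add: sum.swap[of _ "{..<n}" "{..<e}"])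
      also have "\<dots> = 0" using h by simp
      finally show "(\<Sum>K<e*n. w ! K * gray e \<alpha> M y ! K) = 0" .
    qed
  next
    assume gd: "gray e \<alpha> M y \<in> F_dual (e * n) (gray e \<alpha> M ` C)"
    show "y \<in> R_dual e n C"
      unfolding R_dual_def
    proof (intro CollectI conjI ballI y)
      fix x assume xC: "x \<in> C"
      have lx: "length x = n" by (rule lenC[OF xC])
      show "R_inner e x y = 0"
        unfolding R_inner_iff[OF lx]
      proof (intro allI impI)
        fix i assume i: "i < e"
        define x' where "x' = map (Rmult e (mu e \<alpha> i)) x"
        have x'C: "x' \<in> C" unfolding x'_def using lin xC mu_deg[of i]
          by (simp add: linear_code_R_def Rset_def)
        have x'ev: "poly (x'!j) (\<alpha> k) = (if k = i then poly (x!j) (\<alpha> k) else 0)"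
          if "j < n" "k < e" for j k
          using that lx i by (simp add: x'_def Rmult_eval mu_eval)
        have "0 = (\<Sum>K<e*n. gray e \<alpha> M x' ! K * gray e \<alpha> M y ! K)"
          using gd x'C by (simp add: F_dual_def)
        also have "\<dots> = \<gamma> * (\<Sum>j<n. \<Sum>k<e. poly (x'!j) (\<alpha> k) * poly (y!j) (\<alpha> k))"
          using F_inner[OF Mo _ y] x'C CR by auto
        also have "\<dots> = \<gamma> * (\<Sum>j<n. poly (x!j) (\<alpha> i) * poly (y!j) (\<alpha> i))"
        proof -
          have "(\<Sum>k<e. poly (x'!j) (\<alpha> k) * poly (y!j) (\<alpha> k)) = poly (x!j) (\<alpha> i) * poly (y!j) (\<alpha> i)"
            if j: "j < n" for j
          proof -
            have "(\<Sum>k<e. poly (x'!j) (\<alpha> k) * poly (y!j) (\<alpha> k))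
                = (\<Sum>k<e. if k = i then poly (x!j) (\<alpha> k) * poly (y!j) (\<alpha> k) else 0)"
              by (rule sum.cong) (simp_all add: x'ev j)
            also have "\<dots> = poly (x!j) (\<alpha> i) * poly (y!j) (\<alpha> i)" using i by simp
            finally show ?thesis .
          qed
          thus ?thesis by simp
        qed
        finally show "(\<Sum>j<n. poly (x!j) (\<alpha> i) * poly (y!j) (\<alpha> i)) = 0" using g by simp
      qed
    qed
  qed
qed

lemma main:
  assumes Mo: "\<forall>i<e. \<forall>k<e. (\<Sum>j<e. M i j * M k j) = (if i = k then \<gamma> else 0)"
    and g: "\<gamma> \<noteq> 0" and lin: "linear_code_R e n C"
  shows "LCD_R e n C \<longleftrightarrow> LCD_F (e * n) (gray e \<alpha> M ` C)"
proof -
  have CR: "C \<subseteq> Rvecs e n" and C0: "replicate n 0 \<in> C" using lin by (auto simp: linear_code_R_def)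
  note cl = claim[OF Mo g lin]
  show ?thesis
  proof
    assume L: "LCD_R e n C"
    have z: "replicate n 0 \<in> R_dual e n C" using L by (auto simp: LCD_R_def)
    show "LCD_F (e * n) (gray e \<alpha> M ` C)"
      unfolding LCD_F_def
    proof
      show "gray e \<alpha> M ` C \<inter> F_dual (e * n) (gray e \<alpha> M ` C) \<subseteq> {replicate (e * n) 0}"
      proof
        fix w assume "w \<in> gray e \<alpha> M ` C \<inter> F_dual (e * n) (gray e \<alpha> M ` C)"
        then obtain y where yC: "y \<in> C" and w: "w = gray e \<alpha> M y" and wd: "w \<in> F_dual (e * n) (gray e \<alpha> M ` C)" by auto
        have "y \<in> R_dual e n C" using cl[OF yC] wd w by simp
        hence "y = replicate n 0" using L yC by (auto simp: LCD_R_def)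
        thus "w \<in> {replicate (e * n) 0}" using w gray_zero by simp
      qed
      show "{replicate (e * n) 0} \<subseteq> gray e \<alpha> M ` C \<inter> F_dual (e * n) (gray e \<alpha> M ` C)"
        using cl[OF C0] z C0 gray_zero[of M n] by (metis (no_types, lifting) IntI empty_subsetI image_eqI insert_subset)
    qed
  next
    assume F: "LCD_F (e * n) (gray e \<alpha> M ` C)"
    have z: "replicate (e * n) 0 \<in> F_dual (e * n) (gray e \<alpha> M ` C)" using F by (auto simp: LCD_F_def)
    show "LCD_R e n C"
      unfolding LCD_R_def
    proof
      show "C \<inter> R_dual e n C \<subseteq> {replicate n 0}"
      proof
        fix y assume y: "y \<in> C \<inter> R_dual e n C"
        hence "gray e \<alpha> M y \<in> gray e \<alpha> M ` C \<inter> F_dual (e * n) (gray e \<alpha> M ` C)"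
          using cl by auto
        hence "gray e \<alpha> M y = replicate (e * n) 0" using F by (auto simp: LCD_F_def)
        thus "y \<in> {replicate n 0}" using gray_inj0[OF Mo g] y CR by auto
      qed
      show "{replicate n 0} \<subseteq> C \<inter> R_dual e n C"
        using cl[OF C0] z C0 gray_zero[of M n] by simp
    qed
  qed
qed

end

theorem theorem4p8:
  fixes p m e t n :: nat
    and \<alpha> :: "nat \<Rightarrow> 'a::{finite,field}"
    and M :: "nat \<Rightarrow> nat \<Rightarrow> 'a"
    and \<gamma> :: 'a
    and C :: "'a poly list set"
  assumes "prime p" and "odd p" and "m \<ge> 1"
    and "CARD('a) = p ^ m"
    and "e \<ge> 2" and "t \<ge> 1" and "CARD('a) = e * t + 1"
    and "uf e = (\<Prod>i<e. [:- \<alpha> i, 1:])"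
    and "\<exists>N :: nat \<Rightarrow> nat \<Rightarrow> 'a. \<forall>i<e. \<forall>k<e.
            (\<Sum>j<e. M i j * N j k) = (if i = k then 1 else 0)"
    and "\<gamma> \<noteq> 0"
    and "\<forall>i<e. \<forall>k<e. (\<Sum>j<e. M i j * M k j) = (if i = k then \<gamma> else 0)"
    and "linear_code_R e n C"
  shows "LCD_R e n C \<longleftrightarrow> LCD_F (e * n) (gray e \<alpha> M ` C)"
proof -
  have echar: "of_nat e \<noteq> (0::'a)"
  proof
    assume h: "of_nat e = (0::'a)"
    have "(0::'a) = of_nat CARD('a)" by (rule of_nat_card_zero[symmetric])
    also have "\<dots> = of_nat e * of_nat t + 1" using assms(7) by simp
    also have "\<dots> = 1" using h by simp
    finally show False by simp
  qed
  interpret lcdsetup e \<alpha>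
    using assms(5,8) echar by unfold_locales auto
  show ?thesis by (rule main[OF assms(11,10,12)])
qed

end
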